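(* Let $G=(V,E)$ be a connected finite undirected graph without loops, with vertex set $V=\{1,\dots,n\}$, $n\ge 2$. Let $D$ be a self-adjoint $n\times n$ complex matrix compatible with $G$, i.e. $D_{ij}=D_{ji}=0$ whenever $i\neq j$ and $\{i,j\}\notin E$. For $v\in V$ let $\Delta(v)$ be the degree of $v$ in $G$ (the number of edges of $G$ incident to $v$), let $\Delta=\mathrm{diag}(\Delta(1),\dots,\Delta(n))$, let $\Delta(G)=\max\{\Delta(i)\mid i=1,\dots,n\}$, and let $D_\Delta=\Delta^{-1/2}D\Delta^{-1/2}$. Then for all $i,j\in V$, $$\ell^D(i,j)\le d^{D_\Delta}(i,j)\le \Delta(G)\,d^D(i,j).$$
   Context: For a self-adjoint $n\times n$ matrix $M$, the noncommutative distance is $d^M(i,j)=\sup\{|a(i)-a(j)| : a\in\mathbb{C}^n,\ \|[M,\pi(a)]\|\le 1\}\in[0,+\infty]$, where $\pi(a)=\mathrm{diag}(a(1),\dots,a(n))$ and $\|\cdot\|$ is the operator norm. The weight of an edge $\{i,j\}\in E$ is $w^D(i,j)=|D_{ij}|^{-1}\in(0,+\infty]$. The length of a path in $G$ is the sum of the weights of its edges, and $\ell^D(i,j)$ (the geodesic distance) is the infimum of the lengths of all paths in $G$ from $i$ to $j$. *)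

theory Defs
  imports "HOL-Analysis.Analysis"
begin

text \<open>Vectors in C^n are functions nat => complex (only indices 1..n matter);
  n x n matrices are functions nat => nat => complex (only indices in 1..n matter).\<close>

definition vnorm :: "nat \<Rightarrow> (nat \<Rightarrow> complex) \<Rightarrow> real" where
  "vnorm n x = sqrt (\<Sum>i\<in>{1..n}. (cmod (x i))\<^sup>2)"

definition mvec :: "nat \<Rightarrow> (nat \<Rightarrow> nat \<Rightarrow> complex) \<Rightarrow> (nat \<Rightarrow> complex) \<Rightarrow> (nat \<Rightarrow> complex)" where
  "mvec n A x = (\<lambda>i. \<Sum>j\<in>{1..n}. A i j * x j)"

definition opnorm :: "nat \<Rightarrow> (nat \<Rightarrow> nat \<Rightarrow> complex) \<Rightarrow> real" where
  "opnorm n A = Sup {vnorm n (mvec n A x) | x. vnorm n x \<le> 1}"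

definition diagm :: "(nat \<Rightarrow> complex) \<Rightarrow> (nat \<Rightarrow> nat \<Rightarrow> complex)" where
  "diagm a = (\<lambda>i j. if i = j then a i else 0)"

definition mmult :: "nat \<Rightarrow> (nat \<Rightarrow> nat \<Rightarrow> complex) \<Rightarrow> (nat \<Rightarrow> nat \<Rightarrow> complex) \<Rightarrow> (nat \<Rightarrow> nat \<Rightarrow> complex)" where
  "mmult n A B = (\<lambda>i k. \<Sum>j\<in>{1..n}. A i j * B j k)"

definition commutator :: "nat \<Rightarrow> (nat \<Rightarrow> nat \<Rightarrow> complex) \<Rightarrow> (nat \<Rightarrow> nat \<Rightarrow> complex) \<Rightarrow> (nat \<Rightarrow> nat \<Rightarrow> complex)" where
  "commutator n A B = (\<lambda>i k. mmult n A B i k - mmult n B A i k)"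

definition nc_dist :: "nat \<Rightarrow> (nat \<Rightarrow> nat \<Rightarrow> complex) \<Rightarrow> nat \<Rightarrow> nat \<Rightarrow> ereal" where
  "nc_dist n M i j = (SUP a\<in>{a. opnorm n (commutator n M (diagm a)) \<le> 1}. ereal (cmod (a i - a j)))"

definition weight :: "(nat \<Rightarrow> nat \<Rightarrow> complex) \<Rightarrow> nat \<Rightarrow> nat \<Rightarrow> ereal" where
  "weight D i j = (if D i j = 0 then \<infinity> else ereal (1 / cmod (D i j)))"

definition is_path :: "nat set set \<Rightarrow> nat \<Rightarrow> nat \<Rightarrow> nat list \<Rightarrow> bool" where
  "is_path E i j p \<longleftrightarrow> p \<noteq> [] \<and> hd p = i \<and> last p = j \<and>
     (\<forall>k. Suc k < length p \<longrightarrow> {p ! k, p ! Suc k} \<in> E)"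

definition path_length :: "(nat \<Rightarrow> nat \<Rightarrow> complex) \<Rightarrow> nat list \<Rightarrow> ereal" where
  "path_length D p = (\<Sum>k\<leftarrow>[0..<length p - 1]. weight D (p ! k) (p ! Suc k))"

definition geod_dist :: "nat set set \<Rightarrow> (nat \<Rightarrow> nat \<Rightarrow> complex) \<Rightarrow> nat \<Rightarrow> nat \<Rightarrow> ereal" where
  "geod_dist E D i j = (INF p\<in>{p. is_path E i j p}. path_length D p)"

definition simple_graph :: "nat \<Rightarrow> nat set set \<Rightarrow> bool" where
  "simple_graph n E \<longleftrightarrow> (\<forall>e\<in>E. \<exists>u v. u \<noteq> v \<and> u \<in> {1..n} \<and> v \<in> {1..n} \<and> e = {u, v})"

definition connected_graph :: "nat \<Rightarrow> nat set set \<Rightarrow> bool" where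
  "connected_graph n E \<longleftrightarrow> (\<forall>i\<in>{1..n}. \<forall>j\<in>{1..n}. \<exists>p. is_path E i j p)"

definition degree :: "nat set set \<Rightarrow> nat \<Rightarrow> nat" where
  "degree E v = card {e\<in>E. v \<in> e}"

definition max_degree :: "nat \<Rightarrow> nat set set \<Rightarrow> nat" where
  "max_degree n E = Max (degree E ` {1..n})"

definition deg_normalize :: "nat set set \<Rightarrow> (nat \<Rightarrow> nat \<Rightarrow> complex) \<Rightarrow> (nat \<Rightarrow> nat \<Rightarrow> complex)" where
  "deg_normalize E D = (\<lambda>i j. complex_of_real (1 / sqrt (real (degree E i))) * D i j
                              * complex_of_real (1 / sqrt (real (degree E j))))"

end

theory Submission
  imports Defs
begin

lemma vnorm_L2: "vnorm n x = L2_set (\<lambda>i. cmod (x i)) {1..n}"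
  unfolding vnorm_def L2_set_def by simp

lemma vnorm_cong: "(\<And>k. k \<in> {1..n} \<Longrightarrow> x k = y k) \<Longrightarrow> vnorm n x = vnorm n y"
  unfolding vnorm_def by simp

lemma vnorm_scale: "vnorm n (\<lambda>k. r * x k) = cmod r * vnorm n x"
  unfolding vnorm_L2 by (simp add: L2_set_right_distrib norm_mult)

lemma vnorm_nonneg: "0 \<le> vnorm n x"
  unfolding vnorm_L2 by simp

lemma vnorm_pointwise_le:
  assumes "\<And>k. k \<in> {1..n} \<Longrightarrow> cmod (y k) \<le> c * cmod (x k)" and "0 \<le> c"
  shows "vnorm n y \<le> c * vnorm n x"
proof -
  have "vnorm n y \<le> L2_set (\<lambda>k. c * cmod (x k)) {1..n}"
    unfolding vnorm_L2 by (rule L2_set_mono) (use assms in auto)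
  also have "\<dots> = c * vnorm n x" unfolding vnorm_L2 using L2_set_right_distrib[OF assms(2), of "\<lambda>i. cmod (x i)" "{1..n}"] by simp
  finally show ?thesis .
qed

lemma mvec_bound:
  "vnorm n (mvec n A x) \<le> (\<Sum>k\<in>{1..n}. \<Sum>l\<in>{1..n}. cmod (A k l)) * vnorm n x"
proof -
  have "vnorm n (mvec n A x) \<le> (\<Sum>k\<in>{1..n}. cmod (mvec n A x k))"
    unfolding vnorm_L2 by (rule L2_set_le_sum) simp
  also have "\<dots> \<le> (\<Sum>k\<in>{1..n}. (\<Sum>l\<in>{1..n}. cmod (A k l)) * vnorm n x)"
  proof (rule sum_mono)
    fix k assume "k \<in> {1..n}"
    have "cmod (mvec n A x k) \<le> (\<Sum>l\<in>{1..n}. cmod (A k l * x l))"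
      unfolding mvec_def by (rule norm_sum)
    also have "\<dots> \<le> (\<Sum>l\<in>{1..n}. cmod (A k l) * vnorm n x)"
    proof (rule sum_mono)
      fix l assume "l \<in> {1..n}"
      have "cmod (x l) \<le> vnorm n x" unfolding vnorm_L2
        by (rule member_le_L2_set[where f="\<lambda>i. cmod (x i)"]) (use \<open>l \<in> {1..n}\<close> in auto)
      then show "cmod (A k l * x l) \<le> cmod (A k l) * vnorm n x"
        by (simp add: norm_mult mult_left_mono)
    qed
    also have "\<dots> = (\<Sum>l\<in>{1..n}. cmod (A k l)) * vnorm n x" by (simp add: sum_distrib_right)
    finally show "cmod (mvec n A x k) \<le> (\<Sum>l\<in>{1..n}. cmod (A k l)) * vnorm n x" .
  qed
  also have "\<dots> = (\<Sum>k\<in>{1..n}. \<Sum>l\<in>{1..n}. cmod (A k l)) * vnorm n x" by (simp add: sum_distrib_right)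
  finally show ?thesis .
qed

lemma opnorm_bdd: "bdd_above {vnorm n (mvec n A x) | x. vnorm n x \<le> 1}"
proof -
  let ?K = "(\<Sum>k\<in>{1..n}. \<Sum>l\<in>{1..n}. cmod (A k l))"
  have "0 \<le> ?K" by (simp add: sum_nonneg)
  show ?thesis
  proof (rule bdd_aboveI[where M="?K"])
    fix y assume "y \<in> {vnorm n (mvec n A x) | x. vnorm n x \<le> 1}"
    then obtain x where "y = vnorm n (mvec n A x)" "vnorm n x \<le> 1" by auto
    then show "y \<le> ?K" using mvec_bound[of n A x] \<open>0 \<le> ?K\<close>
      by (smt (verit) mult_left_le)
  qed
qed

lemma opnorm_upper: "vnorm n x \<le> 1 \<Longrightarrow> vnorm n (mvec n A x) \<le> opnorm n A"
  unfolding opnorm_def by (rule cSup_upper) (use opnorm_bdd in auto)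

lemma opnorm_nonneg: "0 \<le> opnorm n A"
proof -
  have "vnorm n (\<lambda>_. 0) = 0" unfolding vnorm_def by simp
  then have "vnorm n (mvec n A (\<lambda>_. 0)) \<le> opnorm n A" by (intro opnorm_upper) simp
  then show ?thesis using vnorm_nonneg by (metis order_trans)
qed

lemma opnorm_bound: "vnorm n (mvec n A x) \<le> opnorm n A * vnorm n x"
proof (cases "vnorm n x = 0")
  case True
  then have "\<forall>k\<in>{1..n}. cmod (x k) = 0" unfolding vnorm_L2 by (simp add: L2_set_eq_0_iff)
  then have "vnorm n (mvec n A x) = vnorm n (\<lambda>_. 0)"
    by (intro vnorm_cong) (auto simp: mvec_def)
  then show ?thesis using True by (simp add: vnorm_def)
next
  case False
  define c where "c = vnorm n x"
  have cpos: "c > 0" using False vnorm_nonneg c_def by (metis less_eq_real_def)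
  define y where "y = (\<lambda>k. complex_of_real (1/c) * x k)"
  have "vnorm n y = 1" unfolding y_def vnorm_scale using cpos c_def by (simp add: norm_divide)
  then have "vnorm n (mvec n A y) \<le> opnorm n A" by (intro opnorm_upper) simp
  moreover have "mvec n A y = (\<lambda>k. complex_of_real (1/c) * mvec n A x k)"
    unfolding y_def mvec_def by (auto simp: sum_distrib_left ac_simps)
  moreover have "vnorm n (\<lambda>k. complex_of_real (1/c) * mvec n A x k) = (1/c) * vnorm n (mvec n A x)"
    using vnorm_scale[of n "complex_of_real (1/c)" "mvec n A x"] cpos by (simp add: norm_divide)
  ultimately have "(1/c) * vnorm n (mvec n A x) \<le> opnorm n A"
    by simp
  then show ?thesis using cpos c_def by (simp add: field_simps)
qed

lemma opnorm_le:
  assumes "\<And>x. vnorm n x \<le> 1 \<Longrightarrow> vnorm n (mvec n A x) \<le> c"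
  shows "opnorm n A \<le> c"
  unfolding opnorm_def
proof (rule cSup_least)
  show "{vnorm n (mvec n A x) | x. vnorm n x \<le> 1} \<noteq> {}"
    by (auto intro!: exI[of _ "\<lambda>_. 0"] simp: vnorm_def)
qed (use assms in auto)

lemma comm_mvec:
  assumes "k \<in> {1..n}"
  shows "mvec n (commutator n M (diagm a)) x k = (\<Sum>l\<in>{1..n}. M k l * (a l - a k) * x l)"
proof -
  have h1: "mmult n M (diagm a) k l = M k l * a l" if "l \<in> {1..n}" for l
    unfolding mmult_def diagm_def using that
    by (simp add: if_distrib[where f="\<lambda>z. M k _ * z"] sum.delta cong: if_cong)
  have h2: "mmult n (diagm a) M k l = a k * M k l" for l
    unfolding mmult_def diagm_def using assms
    by (simp add: if_distrib[where f="\<lambda>z. z * M _ l"] sum.delta cong: if_cong)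
  show ?thesis unfolding mvec_def commutator_def
    by (rule sum.cong) (auto simp: h1 h2 algebra_simps)
qed

lemma sum_ind: "finite A \<Longrightarrow> (\<Sum>l\<in>A. (if P l then 1 else 0::real)) = real (card {l\<in>A. P l})"
  by (simp add: sum.If_cases Int_def conj_commute)

lemma schur:
  assumes deg: "\<forall>l\<in>{1..n}. card {k\<in>{1..n}. {k,l}\<in>E} = degree E l"
    and pos: "\<forall>l\<in>{1..n}. degree E l > 0"
    and C: "\<forall>k\<in>{1..n}. \<forall>l\<in>{1..n}. cmod (C k l) \<le>
        (if {k,l}\<in>E then 1/sqrt(real(degree E k)*real(degree E l)) else 0)"
  shows "vnorm n (mvec n C x) \<le> vnorm n x"
proof -
  define e where "e = (\<lambda>k l. if {k,l}\<in>E then 1 else 0::real)"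
  define d where "d = (\<lambda>k. real (degree E k))"
  have dpos: "d k > 0" if "k \<in> {1..n}" for k using pos that d_def by auto
  have esum1: "(\<Sum>l\<in>{1..n}. e k l) = d k" if "k \<in> {1..n}" for k
  proof -
    have "{l\<in>{1..n}. {k,l}\<in>E} = {l\<in>{1..n}. {l,k}\<in>E}" by (auto simp: insert_commute)
    then show ?thesis unfolding e_def d_def using deg that by (simp add: sum_ind)
  qed
  have esum2: "(\<Sum>k\<in>{1..n}. e k l) = d l" if "l \<in> {1..n}" for l
    unfolding e_def d_def using deg that by (simp add: sum_ind)
  have e01: "e k l * e k l = e k l" "0 \<le> e k l" for k l unfolding e_def by auto
  have row: "(cmod (mvec n C x k))\<^sup>2 \<le> (\<Sum>l\<in>{1..n}. e k l * (cmod (x l))\<^sup>2 / d l)"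
    if k: "k \<in> {1..n}" for k
  proof -
    have "cmod (mvec n C x k) \<le> (\<Sum>l\<in>{1..n}. cmod (C k l * x l))"
      unfolding mvec_def by (rule norm_sum)
    also have "\<dots> \<le> (\<Sum>l\<in>{1..n}. \<bar>e k l / sqrt (d k)\<bar> * \<bar>e k l * cmod (x l) / sqrt (d l)\<bar>)"
    proof (rule sum_mono)
      fix l assume l: "l \<in> {1..n}"
      have "cmod (C k l) \<le> e k l / (sqrt (d k) * sqrt (d l))"
        using C[rule_format, OF k l] unfolding e_def d_def by (simp add: real_sqrt_mult split: if_splits)
      then have "cmod (C k l) * cmod (x l) \<le> e k l / (sqrt (d k) * sqrt (d l)) * cmod (x l)"
        by (rule mult_right_mono) simp_all
      also have "\<dots> = \<bar>e k l / sqrt (d k)\<bar> * \<bar>e k l * cmod (x l) / sqrt (d l)\<bar>"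
        using e01[of k l] dpos[OF k] dpos[OF l] by (simp add: abs_mult) blast
      finally show "cmod (C k l * x l) \<le> \<dots>" by (simp add: norm_mult)
    qed
    also have "\<dots> \<le> L2_set (\<lambda>l. e k l / sqrt (d k)) {1..n} * L2_set (\<lambda>l. e k l * cmod (x l) / sqrt (d l)) {1..n}"
      by (rule L2_set_mult_ineq)
    also have "L2_set (\<lambda>l. e k l / sqrt (d k)) {1..n} = 1"
    proof -
      have "(\<Sum>l\<in>{1..n}. (e k l / sqrt (d k))\<^sup>2) = (\<Sum>l\<in>{1..n}. e k l) / d k"
        using dpos[OF k] by (simp add: power2_eq_square sum_divide_distrib e01(1))
      then show ?thesis unfolding L2_set_def using esum1[OF k] dpos[OF k] by simp
    qed
    finally have le: "cmod (mvec n C x k) \<le> L2_set (\<lambda>l. e k l * cmod (x l) / sqrt (d l)) {1..n}" by simp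
    have "(cmod (mvec n C x k))\<^sup>2 \<le> (L2_set (\<lambda>l. e k l * cmod (x l) / sqrt (d l)) {1..n})\<^sup>2"
      using le by (simp add: power_mono)
    also have "\<dots> = (\<Sum>l\<in>{1..n}. (e k l * cmod (x l) / sqrt (d l))\<^sup>2)"
      unfolding L2_set_def by (simp add: sum_nonneg)
    also have "\<dots> = (\<Sum>l\<in>{1..n}. e k l * (cmod (x l))\<^sup>2 / d l)"
    proof (rule sum.cong)
      fix l assume l: "l \<in> {1..n}"
      show "(e k l * cmod (x l) / sqrt (d l))\<^sup>2 = e k l * (cmod (x l))\<^sup>2 / d l"
        using dpos[OF l] e01(1)[of k l] by (simp add: power_divide power_mult_distrib power2_eq_square[of "e k l"])
    qed simp
    finally show ?thesis .
  qed
  have "(\<Sum>k\<in>{1..n}. (cmod (mvec n C x k))\<^sup>2) \<le> (\<Sum>k\<in>{1..n}. \<Sum>l\<in>{1..n}. e k l * (cmod (x l))\<^sup>2 / d l)"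
    by (rule sum_mono) (rule row)
  also have "\<dots> = (\<Sum>l\<in>{1..n}. \<Sum>k\<in>{1..n}. e k l * (cmod (x l))\<^sup>2 / d l)"
    by (rule sum.swap)
  also have "\<dots> = (\<Sum>l\<in>{1..n}. (cmod (x l))\<^sup>2)"
  proof (rule sum.cong)
    fix l assume l: "l \<in> {1..n}"
    have "(\<Sum>k\<in>{1..n}. e k l * (cmod (x l))\<^sup>2 / d l) = (\<Sum>k\<in>{1..n}. e k l) * (cmod (x l))\<^sup>2 / d l"
      by (simp add: sum_distrib_right sum_divide_distrib)
    then show "(\<Sum>k\<in>{1..n}. e k l * (cmod (x l))\<^sup>2 / d l) = (cmod (x l))\<^sup>2"
      using esum2[OF l] dpos[OF l] by simp
  qed simp
  finally show ?thesis unfolding vnorm_def by (rule real_sqrt_le_mono)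
qed

lemma simple_finite: "simple_graph n E \<Longrightarrow> finite E"
proof -
  assume s: "simple_graph n E"
  have "E \<subseteq> Pow {1..n}" using s unfolding simple_graph_def by fastforce
  then show "finite E" by (rule finite_subset) simp
qed

lemma deg_card:
  assumes s: "simple_graph n E" and l: "l \<in> {1..n}"
  shows "card {k\<in>{1..n}. {k,l}\<in>E} = degree E l"
proof -
  have "bij_betw (\<lambda>k. {k,l}) {k\<in>{1..n}. {k,l}\<in>E} {e\<in>E. l\<in>e}"
  proof (rule bij_betwI')
    fix x y assume x: "x \<in> {k\<in>{1..n}. {k,l}\<in>E}" and y: "y \<in> {k\<in>{1..n}. {k,l}\<in>E}"
    have "x \<noteq> l" using x s unfolding simple_graph_def by (auto simp: doubleton_eq_iff)
    then show "({x, l} = {y, l}) = (x = y)" by (auto simp: doubleton_eq_iff)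
  next
    fix x assume "x \<in> {k\<in>{1..n}. {k,l}\<in>E}" then show "{x, l} \<in> {e\<in>E. l\<in>e}" by auto
  next
    fix e assume e: "e \<in> {e\<in>E. l\<in>e}"
    then obtain u v where "u \<in> {1..n}" "v \<in> {1..n}" "e = {u,v}" using s unfolding simple_graph_def by blast
    then show "\<exists>x\<in>{k\<in>{1..n}. {k,l}\<in>E}. e = {x, l}" using e
      by (auto simp: insert_commute)
  qed
  then show ?thesis unfolding degree_def by (rule bij_betw_same_card)
qed

lemma deg_pos:
  assumes "n \<ge> 2" "simple_graph n E" "connected_graph n E" and l: "l \<in> {1..n}"
  shows "degree E l > 0"
proof -
  obtain j where j: "j \<in> {1..n}" "j \<noteq> l"
  proof (cases "l = 1")
    case True then show ?thesis using that[of 2] assms(1) by auto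
  next
    case False then show ?thesis using that[of 1] assms(1) by auto
  qed
  then obtain p where p: "is_path E l j p" using assms(3) l unfolding connected_graph_def by blast
  have "length p \<noteq> 1"
  proof
    assume "length p = 1"
    then obtain a where "p = [a]" by (cases p) auto
    then show False using p j unfolding is_path_def by auto
  qed
  moreover have "p \<noteq> []" using p unfolding is_path_def by auto
  ultimately have "Suc 0 < length p" by (cases p) auto
  then have "{p!0, p!1} \<in> E" using p unfolding is_path_def by auto
  moreover have "p!0 = l" using p unfolding is_path_def by (cases p) auto
  ultimately have "{p!0, p!1} \<in> {e\<in>E. l\<in>e}" by auto
  moreover have "finite {e\<in>E. l\<in>e}" using simple_finite[OF assms(2)] by simp
  ultimately show ?thesis unfolding degree_def by (metis card_gt_0_iff empty_iff)
qed

lemma weight_nonneg: "0 \<le> weight D k l"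
  unfolding weight_def by auto

lemma path_length_nonneg: "0 \<le> path_length D p"
  unfolding path_length_def by (rule sum_list_nonneg) (auto simp: weight_nonneg)

lemma path_length_snoc:
  assumes "p \<noteq> []"
  shows "path_length D (p @ [l]) = path_length D p + weight D (last p) l"
proof -
  obtain m where m: "length p = Suc m" using assms by (cases p) auto
  have "[0..<length (p@[l]) - 1] = [0..<m] @ [m]" using m by simp
  then have "path_length D (p @ [l]) = (\<Sum>k\<leftarrow>[0..<m]. weight D ((p@[l]) ! k) ((p@[l]) ! Suc k)) + weight D ((p@[l]) ! m) ((p@[l]) ! Suc m)"
    unfolding path_length_def by simp
  also have "(\<Sum>k\<leftarrow>[0..<m]. weight D ((p@[l]) ! k) ((p@[l]) ! Suc k)) = (\<Sum>k\<leftarrow>[0..<m]. weight D (p ! k) (p ! Suc k))"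
    by (rule arg_cong[where f=sum_list], rule map_cong) (auto simp: m nth_append)
  also have "\<dots> = path_length D p" unfolding path_length_def using m by simp
  also have "(p@[l]) ! m = last p" using m assms by (simp add: nth_append last_conv_nth)
  also have "(p@[l]) ! Suc m = l" using m by (simp add: nth_append)
  finally show ?thesis .
qed

lemma is_path_snoc:
  assumes "is_path E i k p" "{k,l} \<in> E"
  shows "is_path E i l (p @ [l])"
  unfolding is_path_def
proof (intro conjI allI impI)
  show "hd (p @ [l]) = i" using assms unfolding is_path_def by auto
  show "last (p @ [l]) = l" by simp
  show "p @ [l] \<noteq> []" by simp
  fix m assume m: "Suc m < length (p @ [l])"
  show "{(p @ [l]) ! m, (p @ [l]) ! Suc m} \<in> E"
  proof (cases "Suc m < length p")
    case True then show ?thesis using assms unfolding is_path_def by (auto simp: nth_append)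
  next
    case False
    then have "m = length p - 1" "p \<noteq> []" using m assms unfolding is_path_def by auto
    then show ?thesis using assms unfolding is_path_def
      by (auto simp: nth_append last_conv_nth)
  qed
qed

lemma geod_nonneg: "0 \<le> geod_dist E D i k"
  unfolding geod_dist_def by (rule INF_greatest) (rule path_length_nonneg)

lemma geod_self: "geod_dist E D i i = 0"
proof -
  have "is_path E i i [i]" unfolding is_path_def by auto
  then have "geod_dist E D i i \<le> path_length D [i]" unfolding geod_dist_def by (intro INF_lower) auto
  also have "\<dots> = 0" unfolding path_length_def by simp
  finally show ?thesis using geod_nonneg[of E D i i] by simp
qed

lemma geod_tri:
  assumes "{k,l} \<in> E"
  shows "geod_dist E D i l \<le> geod_dist E D i k + weight D k l"
proof (cases "{p. is_path E i k p} = {}")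
  case True
  then have "geod_dist E D i k = \<infinity>" unfolding geod_dist_def by (simp add: top_ereal_def[symmetric])
  then show ?thesis using weight_nonneg[of D k l] by simp
next
  case False
  have "geod_dist E D i l \<le> (INF p\<in>{p. is_path E i k p}. path_length D p + weight D k l)"
  proof (rule INF_greatest)
    fix p assume "p \<in> {p. is_path E i k p}"
    then have p: "is_path E i k p" by simp
    then have "is_path E i l (p@[l])" using assms by (rule is_path_snoc)
    then have "geod_dist E D i l \<le> path_length D (p@[l])" unfolding geod_dist_def by (intro INF_lower) auto
    also have "\<dots> = path_length D p + weight D k l" using p path_length_snoc[of p D l] unfolding is_path_def by auto
    finally show "geod_dist E D i l \<le> path_length D p + weight D k l" .
  qed
  also have "\<dots> = geod_dist E D i k + weight D k l" unfolding geod_dist_def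
    by (rule INF_ereal_add_left) (use False weight_nonneg path_length_nonneg in auto)
  finally show ?thesis .
qed

lemma trunc_lip:
  fixes A B :: ereal
  assumes "0 \<le> A" "0 \<le> B" "B \<le> A + ereal w" "0 \<le> w" "0 \<le> t"
  shows "real_of_ereal (min B (ereal t)) \<le> real_of_ereal (min A (ereal t)) + w"
  using assms by (cases A; cases B) (auto simp: min_def)

lemma trunc_bounds:
  fixes A :: ereal
  assumes "0 \<le> A" "0 \<le> t"
  shows "ereal (real_of_ereal (min A (ereal t))) = min A (ereal t)"
  using assms by (cases A) (auto simp: min_def)

lemma part1:
  assumes n2: "n \<ge> 2" and s: "simple_graph n E" and c: "connected_graph n E"
    and h: "\<forall>i\<in>{1..n}. \<forall>j\<in>{1..n}. D j i = cnj (D i j)"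
    and z: "\<forall>i\<in>{1..n}. \<forall>j\<in>{1..n}. i \<noteq> j \<and> {i, j} \<notin> E \<longrightarrow> D i j = 0"
    and i: "i \<in> {1..n}" and j: "j \<in> {1..n}" and t: "0 \<le> t"
  shows "min (geod_dist E D i j) (ereal t) \<le> nc_dist n (deg_normalize E D) i j"
proof -
  define g where "g = (\<lambda>k. real_of_ereal (min (geod_dist E D i k) (ereal t)))"
  define a where "a = (\<lambda>k. complex_of_real (g k))"
  define d where "d = (\<lambda>k. real (degree E k))"
  have dpos: "d k > 0" if "k \<in> {1..n}" for k using deg_pos[OF n2 s c that] d_def by simp
  have lip: "\<bar>g l - g k\<bar> * cmod (D k l) \<le> 1" if kl: "k \<in> {1..n}" "l \<in> {1..n}" "{k,l} \<in> E" for k l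
  proof (cases "D k l = 0")
    case True then show ?thesis by simp
  next
    case False
    define w where "w = 1 / cmod (D k l)"
    have wpos: "w > 0" using False w_def by simp
    have "cmod (D l k) = cmod (D k l)" using h[rule_format, OF kl(1) kl(2)] by simp
    then have wkl: "weight D k l = ereal w" "weight D l k = ereal w"
      using False w_def unfolding weight_def by auto
    have "{l,k} \<in> E" using kl by (simp add: insert_commute)
    have "geod_dist E D i l \<le> geod_dist E D i k + ereal w" using geod_tri[OF kl(3), of D i] wkl(1) by simp
    from trunc_lip[OF geod_nonneg geod_nonneg this less_imp_le[OF wpos] t]
    have 1: "g l \<le> g k + w" unfolding g_def .
    have "geod_dist E D i k \<le> geod_dist E D i l + ereal w" using geod_tri[OF \<open>{l,k} \<in> E\<close>, of D i] wkl(2) by simp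
    from trunc_lip[OF geod_nonneg geod_nonneg this less_imp_le[OF wpos] t]
    have 2: "g k \<le> g l + w" unfolding g_def .
    have "\<bar>g l - g k\<bar> \<le> w" using 1 2 by linarith
    then have "\<bar>g l - g k\<bar> * cmod (D k l) \<le> w * cmod (D k l)" by (simp add: mult_right_mono)
    also have "\<dots> = 1" using w_def False by simp
    finally show ?thesis .
  qed
  define C where "C = (\<lambda>k l. deg_normalize E D k l * (a l - a k))"
  have Cb: "\<forall>k\<in>{1..n}. \<forall>l\<in>{1..n}. cmod (C k l) \<le>
        (if {k,l}\<in>E then 1/sqrt(real(degree E k)*real(degree E l)) else 0)"
  proof (intro ballI)
    fix k l assume k: "k \<in> {1..n}" and l: "l \<in> {1..n}"
    have eq: "cmod (C k l) = cmod (D k l) * \<bar>g l - g k\<bar> / (sqrt (d k) * sqrt (d l))"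
      unfolding C_def deg_normalize_def a_def d_def using dpos[OF k] dpos[OF l]
      by (simp add: norm_mult norm_divide d_def flip: of_real_diff)
    show "cmod (C k l) \<le> (if {k,l}\<in>E then 1/sqrt(real(degree E k)*real(degree E l)) else 0)"
    proof (cases "{k,l} \<in> E")
      case True
      have "cmod (D k l) * \<bar>g l - g k\<bar> / (sqrt (d k) * sqrt (d l)) \<le> 1 / (sqrt (d k) * sqrt (d l))"
        using lip[OF k l True] dpos[OF k] dpos[OF l] by (simp add: divide_right_mono mult.commute)
      then show ?thesis using True eq unfolding d_def by (simp add: real_sqrt_mult)
    next
      case False
      then have "k = l \<or> D k l = 0" using z[rule_format, OF k l] by blast
      then show ?thesis using False eq by auto
    qed
  qed
  have op: "opnorm n (commutator n (deg_normalize E D) (diagm a)) \<le> 1"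
  proof (rule opnorm_le)
    fix x :: "nat \<Rightarrow> complex" assume x: "vnorm n x \<le> 1"
    have "vnorm n (mvec n (commutator n (deg_normalize E D) (diagm a)) x) = vnorm n (mvec n C x)"
      by (rule vnorm_cong) (simp only: comm_mvec, simp add: mvec_def C_def)
    also have "\<dots> \<le> vnorm n x"
      by (rule schur[OF _ _ Cb]) (use deg_card[OF s] deg_pos[OF n2 s c] in auto)
    finally show "vnorm n (mvec n (commutator n (deg_normalize E D) (diagm a)) x) \<le> 1" using x by simp
  qed
  have "ereal (cmod (a i - a j)) \<le> nc_dist n (deg_normalize E D) i j"
    unfolding nc_dist_def by (rule SUP_upper) (use op in simp)
  moreover have "g i = 0" unfolding g_def using geod_self t by (simp add: min_def)
  moreover have "g j \<ge> 0" unfolding g_def using geod_nonneg[of E D i j] t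
    by (cases "geod_dist E D i j") (auto simp: min_def)
  moreover have "ereal (g j) = min (geod_dist E D i j) (ereal t)"
    unfolding g_def by (rule trunc_bounds) (use geod_nonneg t in auto)
  ultimately show ?thesis unfolding a_def by (simp flip: of_real_diff)
qed

lemma part2:
  assumes n2: "n \<ge> 2" and s: "simple_graph n E" and c: "connected_graph n E"
  shows "nc_dist n (deg_normalize E D) i j \<le> ereal (real (max_degree n E)) * nc_dist n D i j"
proof -
  define M where "M = real (max_degree n E)"
  define d where "d = (\<lambda>k. real (degree E k))"
  have dpos: "d k > 0" if "k \<in> {1..n}" for k using deg_pos[OF n2 s c that] d_def by simp
  have dle: "d k \<le> M" if "k \<in> {1..n}" for k
    unfolding d_def M_def max_degree_def using that by simp
  have one: "(1::nat) \<in> {1..n}" using n2 by simp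
  have Mpos: "M > 0" using dpos[OF one] dle[OF one] by simp
  show ?thesis unfolding nc_dist_def[of n "deg_normalize E D"] M_def[symmetric]
  proof (rule SUP_least)
    fix a assume "a \<in> {a. opnorm n (commutator n (deg_normalize E D) (diagm a)) \<le> 1}"
    then have opa: "opnorm n (commutator n (deg_normalize E D) (diagm a)) \<le> 1" by simp
    define b where "b = (\<lambda>k. a k / complex_of_real M)"
    let ?Q = "commutator n (deg_normalize E D) (diagm a)"
    have op: "opnorm n (commutator n D (diagm b)) \<le> 1"
    proof (rule opnorm_le)
      fix x :: "nat \<Rightarrow> complex" assume x: "vnorm n x \<le> 1"
      define y where "y = (\<lambda>l. complex_of_real (sqrt (d l)) * x l)"
      have key: "mvec n (commutator n D (diagm b)) x k
          = complex_of_real (sqrt (d k) / M) * mvec n ?Q y k" if k: "k \<in> {1..n}" for k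
        unfolding comm_mvec[OF k] sum_distrib_left
      proof (rule sum.cong)
        fix l assume l: "l \<in> {1..n}"
        have sk: "complex_of_real (sqrt (d k)) \<noteq> 0" using dpos[OF k] by simp
        have sl: "complex_of_real (sqrt (d l)) \<noteq> 0" using dpos[OF l] by simp
        have M0: "complex_of_real M \<noteq> 0" using Mpos by simp
        show "D k l * (b l - b k) * x l =
          complex_of_real (sqrt (d k) / M) * (deg_normalize E D k l * (a l - a k) * y l)"
          using sk sl M0 unfolding deg_normalize_def y_def b_def d_def by (simp add: field_simps)
      qed simp
      have "vnorm n (mvec n (commutator n D (diagm b)) x) \<le> (sqrt M / M) * vnorm n (mvec n ?Q y)"
      proof (rule vnorm_pointwise_le)
        fix k assume k: "k \<in> {1..n}"
        have "sqrt (d k) / M \<le> sqrt M / M"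
          using dle[OF k] Mpos by (simp add: divide_right_mono)
        then have "sqrt (d k) / M * cmod (mvec n ?Q y k) \<le> sqrt M / M * cmod (mvec n ?Q y k)"
          by (rule mult_right_mono) simp
        moreover have "cmod (complex_of_real (sqrt (d k) / M)) = sqrt (d k) / M"
          using dpos[OF k] Mpos by (simp add: norm_divide)
        ultimately show "cmod (mvec n (commutator n D (diagm b)) x k) \<le> sqrt M / M * cmod (mvec n ?Q y k)"
          unfolding key[OF k] norm_mult by simp
      qed (use Mpos in simp)
      also have "\<dots> \<le> (sqrt M / M) * vnorm n y"
      proof (rule mult_left_mono)
        have "vnorm n (mvec n ?Q y) \<le> opnorm n ?Q * vnorm n y" by (rule opnorm_bound)
        also have "\<dots> \<le> 1 * vnorm n y" by (rule mult_right_mono[OF opa vnorm_nonneg])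
        finally show "vnorm n (mvec n ?Q y) \<le> vnorm n y" by simp
      qed (use Mpos in simp)
      also have "\<dots> \<le> (sqrt M / M) * (sqrt M * vnorm n x)"
      proof (rule mult_left_mono)
        show "vnorm n y \<le> sqrt M * vnorm n x"
        proof (rule vnorm_pointwise_le)
          fix k assume k: "k \<in> {1..n}"
          show "cmod (y k) \<le> sqrt M * cmod (x k)"
            unfolding y_def norm_mult using dpos[OF k] dle[OF k]
            by (simp add: mult_right_mono)
        qed (use Mpos in simp)
      qed (use Mpos in simp)
      also have "\<dots> = vnorm n x" using Mpos by (simp add: field_simps)
      finally show "vnorm n (mvec n (commutator n D (diagm b)) x) \<le> 1" using x by simp
    qed
    have le: "ereal (cmod (b i - b j)) \<le> nc_dist n D i j"
      unfolding nc_dist_def by (rule SUP_upper) (use op in simp)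
    have "a i - a j = complex_of_real M * (b i - b j)" unfolding b_def using Mpos
      by (simp add: field_simps)
    then have "cmod (a i - a j) = M * cmod (b i - b j)" using Mpos by (simp add: norm_mult)
    then have "ereal (cmod (a i - a j)) = ereal M * ereal (cmod (b i - b j))" by simp
    also have "\<dots> \<le> ereal M * nc_dist n D i j"
      by (rule ereal_mult_left_mono[OF le]) (use Mpos in simp)
    finally show "ereal (cmod (a i - a j)) \<le> ereal M * nc_dist n D i j" .
  qed
qed

theorem mainTheorem1:
  fixes n :: nat and E :: "nat set set" and D :: "nat \<Rightarrow> nat \<Rightarrow> complex"
  assumes "n \<ge> 2"
    and "simple_graph n E"
    and "connected_graph n E"
    and "\<forall>i\<in>{1..n}. \<forall>j\<in>{1..n}. D j i = cnj (D i j)"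
    and "\<forall>i\<in>{1..n}. \<forall>j\<in>{1..n}. i \<noteq> j \<and> {i, j} \<notin> E \<longrightarrow> D i j = 0"
    and "i \<in> {1..n}" and "j \<in> {1..n}"
  shows "geod_dist E D i j \<le> nc_dist n (deg_normalize E D) i j
       \<and> nc_dist n (deg_normalize E D) i j \<le> ereal (real (max_degree n E)) * nc_dist n D i j"
proof
  have P: "\<And>t. 0 \<le> t \<Longrightarrow> min (geod_dist E D i j) (ereal t) \<le> nc_dist n (deg_normalize E D) i j"
    by (rule part1[OF assms])
  show "geod_dist E D i j \<le> nc_dist n (deg_normalize E D) i j"
  proof (cases "geod_dist E D i j")
    case (real r)
    then have "0 \<le> r" using geod_nonneg[of E D i j] by simp
    from P[OF this] real show ?thesis by simp
  next
    case PInf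
    then have Q: "\<And>t. 0 \<le> t \<Longrightarrow> ereal t \<le> nc_dist n (deg_normalize E D) i j" using P by fastforce
    show ?thesis
    proof (cases "nc_dist n (deg_normalize E D) i j")
      case (real s)
      then show ?thesis using Q[of "\<bar>s\<bar> + 1"] by simp
    next
      case PInf then show ?thesis by simp
    next
      case MInf then show ?thesis using Q[of 0] by simp
    qed
  next
    case MInf then show ?thesis by simp
  qed
  show "nc_dist n (deg_normalize E D) i j \<le> ereal (real (max_degree n E)) * nc_dist n D i j"
    by (rule part2[OF assms(1-3)])
qed

end
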